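(* If $\Phi=(\varphi_n)_{n\in\mathbb{N}}$ is a depth-bounded fuzzy simulation between fuzzy automata $\mathcal{A}$ and $\mathcal{A}'$, then for every $n\in\mathbb{N}$ and every $\alpha\in\mathcal{F}^{n}_{\to}$ we have $\varphi_n^{-1}\circ\alpha^{\mathcal{A}}\le\alpha^{\mathcal{A}'}$; in particular $\varphi_n(x,x')\le\bigwedge_{\alpha\in\mathcal{F}^n_{\to}}(\alpha^{\mathcal{A}}(x)\Rightarrow\alpha^{\mathcal{A}'}(x'))$ for all $(x,x')\in A\times A'$.
   Context: $\mathcal{L}=\langle L,\le,\otimes,\Rightarrow,0,1\rangle$ is a complete residuated lattice: $\langle L,\le,0,1\rangle$ is a complete lattice with least element $0$ and greatest element $1$, $\langle L,\otimes,1\rangle$ is a commutative monoid, and $x\otimes y\le z$ iff $x\le (y\Rightarrow z)$. Fuzzy sets/relations are maps into $L$ ordered pointwise; $\varphi^{-1}(b,a)=\varphi(a,b)$; $(\varphi\circ\psi)(a,c)=\bigvee_b\varphi(a,b)\otimes\psi(b,c)$, $(\varphi\circ g)(a)=\bigvee_b\varphi(a,b)\otimes g(b)$. A fuzzy automaton over $\Sigma$ is $\mathcal{A}=\langle A,\delta^{\mathcal{A}},\sigma^{\mathcal{A}},\tau^{\mathcal{A}}\rangle$ with $A$ nonempty, $\delta^{\mathcal{A}}:A\times\Sigma\times A\to L$, $\sigma^{\mathcal{A}},\tau^{\mathcal{A}}:A\to L$; $\delta^{\mathcal{A}}_s(x,y)=\delta^{\mathcal{A}}(x,s,y)$; similarly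 $\mathcal{A}'$ with states $A'$. The sets $\mathcal{F}^n_{\to}$ ($n\in\mathbb{N}$) are the smallest sets of formulas such that: $\tau\in\mathcal{F}^n_{\to}$; if $s\in\Sigma$ and $\alpha\in\mathcal{F}^n_{\to}$ then $(s\circ\alpha)\in\mathcal{F}^{n+1}_{\to}$; if $a\in L$ and $\alpha\in\mathcal{F}^n_{\to}$ then $(a\to\alpha)\in\mathcal{F}^n_{\to}$; if $\alpha,\beta\in\mathcal{F}^n_{\to}$ then $(\alpha\wedge\beta)\in\mathcal{F}^n_{\to}$. Semantics in $\mathcal{A}$ (a fuzzy set $\alpha^{\mathcal{A}}$ on $A$): $\tau^{\mathcal{A}}$ is the terminal fuzzy set; $(s\circ\alpha)^{\mathcal{A}}=\delta^{\mathcal{A}}_s\circ\alpha^{\mathcal{A}}$; $(a\to\alpha)^{\mathcal{A}}(x)=a\Rightarrow\alpha^{\mathcal{A}}(x)$; $(\alpha\wedge\beta)^{\mathcal{A}}(x)=\alpha^{\mathcal{A}}(x)\wedge\beta^{\mathcal{A}}(x)$. A depth-bounded fuzzy simulation between $\mathcal{A}$ and $\mathcal{A}'$ is a sequence $(\varphi_n)_{n\in\mathbb{N}}$ of fuzzy relations $A\times A'\to L$ with $\varphi_n\le\varphi_{n-1}$ ($n\ge1$), $\varphi_0^{-1}\circ\tau^{\mathcal{A}}\le\tau^{\mathcal{A}'}$, and $\varphi_n^{-1}\circ\delta^{\mathcal{A}}_s\le\delta^{\mathcal{A}'}_s\circ\varphi_{n-1}^{-1}$ for all $s\in\Sigma$,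 $n\ge1$. *)

theory Defs
  imports Main
begin

text \<open>Complete residuated lattice: the carrier is a type of class complete_lattice
(0 = bot, 1 = top); otimes is the monoid operation and res the residuum.\<close>
definition complete_residuated_lattice ::
  "('l::complete_lattice \<Rightarrow> 'l \<Rightarrow> 'l) \<Rightarrow> ('l \<Rightarrow> 'l \<Rightarrow> 'l) \<Rightarrow> bool" where
  "complete_residuated_lattice otimes res \<longleftrightarrow>
     (\<forall>x y z. otimes (otimes x y) z = otimes x (otimes y z)) \<and>
     (\<forall>x y. otimes x y = otimes y x) \<and>
     (\<forall>x. otimes x top = x) \<and>
     (\<forall>x y z. otimes x y \<le> z \<longleftrightarrow> x \<le> res y z)"

text \<open>Formulas: Tau is the terminal formula, Dia s a is (s o a), Imp c a is (c -> a),
Conj a b is (a /\ b).\<close>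
datatype ('s, 'l) fml = Tau | Dia 's "('s, 'l) fml" | Imp 'l "('s, 'l) fml"
  | Conj "('s, 'l) fml" "('s, 'l) fml"

inductive in_Fto :: "nat \<Rightarrow> ('s, 'l) fml \<Rightarrow> bool" where
  Fto_Tau: "in_Fto n Tau"
| Fto_Dia: "in_Fto n \<alpha> \<Longrightarrow> in_Fto (Suc n) (Dia s \<alpha>)"
| Fto_Imp: "in_Fto n \<alpha> \<Longrightarrow> in_Fto n (Imp c \<alpha>)"
| Fto_Conj: "in_Fto n \<alpha> \<Longrightarrow> in_Fto n \<beta> \<Longrightarrow> in_Fto n (Conj \<alpha> \<beta>)"

definition Fto :: "nat \<Rightarrow> ('s, 'l) fml set" where
  "Fto n = {\<alpha>. in_Fto n \<alpha>}"

text \<open>Semantics of a formula in a fuzzy automaton with transition function delta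
(delta x s y = delta_s(x,y)) and terminal fuzzy set tau.\<close>
fun sem :: "('l::complete_lattice \<Rightarrow> 'l \<Rightarrow> 'l) \<Rightarrow> ('l \<Rightarrow> 'l \<Rightarrow> 'l) \<Rightarrow>
    ('a \<Rightarrow> 's \<Rightarrow> 'a \<Rightarrow> 'l) \<Rightarrow> ('a \<Rightarrow> 'l) \<Rightarrow> ('s, 'l) fml \<Rightarrow> 'a \<Rightarrow> 'l" where
  "sem otimes res \<delta> \<tau> Tau x = \<tau> x"
| "sem otimes res \<delta> \<tau> (Dia s \<alpha>) x = (SUP y. otimes (\<delta> x s y) (sem otimes res \<delta> \<tau> \<alpha> y))"
| "sem otimes res \<delta> \<tau> (Imp c \<alpha>) x = res c (sem otimes res \<delta> \<tau> \<alpha> x)"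
| "sem otimes res \<delta> \<tau> (Conj \<alpha> \<beta>) x = inf (sem otimes res \<delta> \<tau> \<alpha> x) (sem otimes res \<delta> \<tau> \<beta> x)"

text \<open>Depth-bounded fuzzy simulation between A = (delta, sigma, tau) and A' = (delta', sigma', tau');
phi n x x' is phi_n(x,x').  The initial fuzzy sets play no role.\<close>
definition depth_bounded_fuzzy_simulation ::
  "('l::complete_lattice \<Rightarrow> 'l \<Rightarrow> 'l) \<Rightarrow>
   ('a \<Rightarrow> 's \<Rightarrow> 'a \<Rightarrow> 'l) \<Rightarrow> ('a \<Rightarrow> 'l) \<Rightarrow>
   ('b \<Rightarrow> 's \<Rightarrow> 'b \<Rightarrow> 'l) \<Rightarrow> ('b \<Rightarrow> 'l) \<Rightarrow>
   (nat \<Rightarrow> 'a \<Rightarrow> 'b \<Rightarrow> 'l) \<Rightarrow> bool" where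
  "depth_bounded_fuzzy_simulation otimes \<delta> \<tau> \<delta>' \<tau>' \<phi> \<longleftrightarrow>
     (\<forall>n\<ge>1. \<forall>x x'. \<phi> n x x' \<le> \<phi> (n - 1) x x') \<and>
     (\<forall>x'. (SUP x. otimes (\<phi> 0 x x') (\<tau> x)) \<le> \<tau>' x') \<and>
     (\<forall>s. \<forall>n\<ge>1. \<forall>x' y.
        (SUP x. otimes (\<phi> n x x') (\<delta> x s y)) \<le> (SUP y'. otimes (\<delta>' x' s y') (\<phi> (n - 1) y y')))"

end

theory Submission
  imports Defs
begin

lemma crl_adj: "complete_residuated_lattice ot r \<Longrightarrow> ot x y \<le> z \<longleftrightarrow> x \<le> r y z"
  unfolding complete_residuated_lattice_def by blast

lemma crl_comm: "complete_residuated_lattice ot r \<Longrightarrow> ot x y = ot y x"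
  unfolding complete_residuated_lattice_def by blast

lemma crl_assoc: "complete_residuated_lattice ot r \<Longrightarrow> ot (ot x y) z = ot x (ot y z)"
  unfolding complete_residuated_lattice_def by blast

lemma crl_mono1: "complete_residuated_lattice ot r \<Longrightarrow> x \<le> y \<Longrightarrow> ot x z \<le> ot y z"
proof -
  assume c: "complete_residuated_lattice ot r" and "x \<le> y"
  have "y \<le> r z (ot y z)" using crl_adj[OF c] by blast
  then have "x \<le> r z (ot y z)" using \<open>x \<le> y\<close> by (rule order_trans[rotated])
  then show ?thesis using crl_adj[OF c] by blast
qed

lemma crl_mono2: "complete_residuated_lattice ot r \<Longrightarrow> x \<le> y \<Longrightarrow> ot z x \<le> ot z y"
  using crl_mono1 crl_comm by metis

lemma crl_sup1: "complete_residuated_lattice ot r \<Longrightarrow> ot (SUP i. f i) z \<le> (SUP i. ot (f i) z)"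
proof -
  assume c: "complete_residuated_lattice ot r"
  have "\<forall>i. f i \<le> r z (SUP i. ot (f i) z)"
    using crl_adj[OF c] by (meson SUP_upper UNIV_I)
  then have "(SUP i. f i) \<le> r z (SUP i. ot (f i) z)" by (simp add: SUP_least)
  then show ?thesis using crl_adj[OF c] by blast
qed

lemma crl_sup2: "complete_residuated_lattice ot r \<Longrightarrow> ot z (SUP i. f i) \<le> (SUP i. ot z (f i))"
  using crl_sup1[of ot r f z] crl_comm[of ot r] by simp

lemma phi_anti:
  assumes "depth_bounded_fuzzy_simulation ot \<delta> \<tau> \<delta>' \<tau>' \<phi>"
  shows "\<phi> n x x' \<le> \<phi> 0 x x'"
proof (induction n)
  case 0 then show ?case by simp
next
  case (Suc n)
  have "\<phi> (Suc n) x x' \<le> \<phi> n x x'" using assms unfolding depth_bounded_fuzzy_simulation_def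
    by (metis diff_Suc_1 le_add1 plus_1_eq_Suc)
  then show ?case using Suc by order
qed

lemma key:
  assumes c: "complete_residuated_lattice ot r"
    and d: "depth_bounded_fuzzy_simulation ot \<delta> \<tau> \<delta>' \<tau>' \<phi>"
    and "in_Fto n \<alpha>"
  shows "\<forall>x x'. ot (\<phi> n x x') (sem ot r \<delta> \<tau> \<alpha> x) \<le> sem ot r \<delta>' \<tau>' \<alpha> x'"
  using assms(3)
proof (induction rule: in_Fto.induct)
  case (Fto_Tau n)
  show ?case
  proof (intro allI)
    fix x x'
    have "ot (\<phi> n x x') (\<tau> x) \<le> ot (\<phi> 0 x x') (\<tau> x)"
      by (rule crl_mono1[OF c phi_anti[OF d]])
    also have "\<dots> \<le> (SUP x. ot (\<phi> 0 x x') (\<tau> x))" by (rule SUP_upper) simp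
    also have "\<dots> \<le> \<tau>' x'" using d unfolding depth_bounded_fuzzy_simulation_def by blast
    finally show "ot (\<phi> n x x') (sem ot r \<delta> \<tau> Tau x) \<le> sem ot r \<delta>' \<tau>' Tau x'" by simp
  qed
next
  case (Fto_Dia n \<alpha> s)
  show ?case
  proof (intro allI)
    fix x x'
    have "ot (\<phi> (Suc n) x x') (SUP y. ot (\<delta> x s y) (sem ot r \<delta> \<tau> \<alpha> y))
        \<le> (SUP y. ot (\<phi> (Suc n) x x') (ot (\<delta> x s y) (sem ot r \<delta> \<tau> \<alpha> y)))"
      by (rule crl_sup2[OF c])
    also have "\<dots> \<le> (SUP y'. ot (\<delta>' x' s y') (sem ot r \<delta>' \<tau>' \<alpha> y'))"
    proof (rule SUP_least)
      fix y
      have "ot (\<phi> (Suc n) x x') (\<delta> x s y) \<le> (SUP x. ot (\<phi> (Suc n) x x') (\<delta> x s y))"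
        by (rule SUP_upper) simp
      also have "\<dots> \<le> (SUP y'. ot (\<delta>' x' s y') (\<phi> n y y'))"
        using d unfolding depth_bounded_fuzzy_simulation_def
        by (metis diff_Suc_1 le_add1 plus_1_eq_Suc)
      finally have h1: "ot (\<phi> (Suc n) x x') (\<delta> x s y) \<le> (SUP y'. ot (\<delta>' x' s y') (\<phi> n y y'))" .
      have "ot (\<phi> (Suc n) x x') (ot (\<delta> x s y) (sem ot r \<delta> \<tau> \<alpha> y))
          = ot (ot (\<phi> (Suc n) x x') (\<delta> x s y)) (sem ot r \<delta> \<tau> \<alpha> y)"
        by (simp add: crl_assoc[OF c])
      also have "\<dots> \<le> ot (SUP y'. ot (\<delta>' x' s y') (\<phi> n y y')) (sem ot r \<delta> \<tau> \<alpha> y)"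
        by (rule crl_mono1[OF c h1])
      also have "\<dots> \<le> (SUP y'. ot (ot (\<delta>' x' s y') (\<phi> n y y')) (sem ot r \<delta> \<tau> \<alpha> y))"
        by (rule crl_sup1[OF c])
      also have "\<dots> \<le> (SUP y'. ot (\<delta>' x' s y') (sem ot r \<delta>' \<tau>' \<alpha> y'))"
      proof (rule SUP_mono)
        fix y' show "\<exists>m\<in>UNIV. ot (ot (\<delta>' x' s y') (\<phi> n y y')) (sem ot r \<delta> \<tau> \<alpha> y)
            \<le> ot (\<delta>' x' s m) (sem ot r \<delta>' \<tau>' \<alpha> m)"
          using crl_mono2[OF c Fto_Dia.IH[rule_format, of y y'], of "\<delta>' x' s y'"]
          by (auto simp: crl_assoc[OF c])
      qed
      finally show "ot (\<phi> (Suc n) x x') (ot (\<delta> x s y) (sem ot r \<delta> \<tau> \<alpha> y))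
          \<le> (SUP y'. ot (\<delta>' x' s y') (sem ot r \<delta>' \<tau>' \<alpha> y'))" .
    qed
    finally show "ot (\<phi> (Suc n) x x') (sem ot r \<delta> \<tau> (Dia s \<alpha>) x) \<le> sem ot r \<delta>' \<tau>' (Dia s \<alpha>) x'"
      by simp
  qed
next
  case (Fto_Imp n \<alpha> cc)
  show ?case
  proof (intro allI)
    fix x x'
    have ev: "ot (r cc (sem ot r \<delta> \<tau> \<alpha> x)) cc \<le> sem ot r \<delta> \<tau> \<alpha> x"
      using crl_adj[OF c] by blast
    have "ot (ot (\<phi> n x x') (r cc (sem ot r \<delta> \<tau> \<alpha> x))) cc
        = ot (\<phi> n x x') (ot (r cc (sem ot r \<delta> \<tau> \<alpha> x)) cc)" by (rule crl_assoc[OF c])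
    also have "\<dots> \<le> ot (\<phi> n x x') (sem ot r \<delta> \<tau> \<alpha> x)" by (rule crl_mono2[OF c ev])
    also have "\<dots> \<le> sem ot r \<delta>' \<tau>' \<alpha> x'" using Fto_Imp.IH by blast
    finally have "ot (\<phi> n x x') (r cc (sem ot r \<delta> \<tau> \<alpha> x)) \<le> r cc (sem ot r \<delta>' \<tau>' \<alpha> x')"
      using crl_adj[OF c] by blast
    then show "ot (\<phi> n x x') (sem ot r \<delta> \<tau> (Imp cc \<alpha>) x) \<le> sem ot r \<delta>' \<tau>' (Imp cc \<alpha>) x'" by simp
  qed
next
  case (Fto_Conj n \<alpha> \<beta>)
  show ?case
  proof (intro allI)
    fix x x'
    have "ot (\<phi> n x x') (inf (sem ot r \<delta> \<tau> \<alpha> x) (sem ot r \<delta> \<tau> \<beta> x)) \<le> ot (\<phi> n x x') (sem ot r \<delta> \<tau> \<alpha> x)"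
      by (rule crl_mono2[OF c]) simp
    also have "\<dots> \<le> sem ot r \<delta>' \<tau>' \<alpha> x'" using Fto_Conj.IH(1) by blast
    finally have 1: "ot (\<phi> n x x') (inf (sem ot r \<delta> \<tau> \<alpha> x) (sem ot r \<delta> \<tau> \<beta> x)) \<le> sem ot r \<delta>' \<tau>' \<alpha> x'" .
    have "ot (\<phi> n x x') (inf (sem ot r \<delta> \<tau> \<alpha> x) (sem ot r \<delta> \<tau> \<beta> x)) \<le> ot (\<phi> n x x') (sem ot r \<delta> \<tau> \<beta> x)"
      by (rule crl_mono2[OF c]) simp
    also have "\<dots> \<le> sem ot r \<delta>' \<tau>' \<beta> x'" using Fto_Conj.IH(2) by blast
    finally have 2: "ot (\<phi> n x x') (inf (sem ot r \<delta> \<tau> \<alpha> x) (sem ot r \<delta> \<tau> \<beta> x)) \<le> sem ot r \<delta>' \<tau>' \<beta> x'" .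
    show "ot (\<phi> n x x') (sem ot r \<delta> \<tau> (Conj \<alpha> \<beta>) x) \<le> sem ot r \<delta>' \<tau>' (Conj \<alpha> \<beta>) x'"
      using 1 2 by simp
  qed
qed

theorem mainTheorem8:
  fixes otimes :: "'l::complete_lattice \<Rightarrow> 'l \<Rightarrow> 'l" and res :: "'l \<Rightarrow> 'l \<Rightarrow> 'l"
    and \<delta> :: "'a \<Rightarrow> 's \<Rightarrow> 'a \<Rightarrow> 'l" and \<sigma> \<tau> :: "'a \<Rightarrow> 'l"
    and \<delta>' :: "'b \<Rightarrow> 's \<Rightarrow> 'b \<Rightarrow> 'l" and \<sigma>' \<tau>' :: "'b \<Rightarrow> 'l"
    and \<phi> :: "nat \<Rightarrow> 'a \<Rightarrow> 'b \<Rightarrow> 'l"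
  assumes "complete_residuated_lattice otimes res"
    and "depth_bounded_fuzzy_simulation otimes \<delta> \<tau> \<delta>' \<tau>' \<phi>"
  shows "(\<forall>n. \<forall>\<alpha>\<in>Fto n. \<forall>x'.
            (SUP x. otimes (\<phi> n x x') (sem otimes res \<delta> \<tau> \<alpha> x)) \<le> sem otimes res \<delta>' \<tau>' \<alpha> x')
       \<and> (\<forall>n x x'. \<phi> n x x' \<le>
            (INF \<alpha>\<in>Fto n. res (sem otimes res \<delta> \<tau> \<alpha> x) (sem otimes res \<delta>' \<tau>' \<alpha> x')))"
proof (intro conjI allI ballI)
  fix n and \<alpha> :: "('s,'l) fml" and x' assume "\<alpha> \<in> Fto n"
  then have "in_Fto n \<alpha>" by (simp add: Fto_def)
  have k: "\<forall>x x'. otimes (\<phi> n x x') (sem otimes res \<delta> \<tau> \<alpha> x) \<le> sem otimes res \<delta>' \<tau>' \<alpha> x'"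
    by (rule key) (use assms \<open>in_Fto n \<alpha>\<close> in auto)
  from k show
    "(SUP x. otimes (\<phi> n x x') (sem otimes res \<delta> \<tau> \<alpha> x)) \<le> sem otimes res \<delta>' \<tau>' \<alpha> x'"
    by (simp add: SUP_least)
next
  fix n x x'
  show "\<phi> n x x' \<le> (INF \<alpha>\<in>Fto n. res (sem otimes res \<delta> \<tau> \<alpha> x) (sem otimes res \<delta>' \<tau>' \<alpha> x'))"
  proof (rule INF_greatest)
    fix \<alpha> :: "('s,'l) fml" assume "\<alpha> \<in> Fto n"
    then have "in_Fto n \<alpha>" by (simp add: Fto_def)
    have k: "\<forall>x x'. otimes (\<phi> n x x') (sem otimes res \<delta> \<tau> \<alpha> x) \<le> sem otimes res \<delta>' \<tau>' \<alpha> x'"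
      by (rule key) (use assms \<open>in_Fto n \<alpha>\<close> in auto)
    from k show "\<phi> n x x' \<le> res (sem otimes res \<delta> \<tau> \<alpha> x) (sem otimes res \<delta>' \<tau>' \<alpha> x')"
      using crl_adj[OF assms(1)] by blast
  qed
qed

end
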